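(* Let $(E_-,E_0,E_+)$ be an object of $\mathcal{A}_2$. Then $E_0=\delta_-(E_-)\oplus\ker\gamma_-=\delta_+(E_+)\oplus\ker\gamma_+=\delta_+(E_+)\oplus\ker\gamma_-=\delta_-(E_-)\oplus\ker\gamma_+$ (internal direct sums), so $(E_0,\delta_-(E_-),\delta_+(E_+),\ker\gamma_-,\ker\gamma_+)$ is an object of $\mathcal{C}$. Moreover, if $(e_-,e_0,e_+)$ is a morphism in $\mathcal{A}_2$ from $(E_-,E_0,E_+)$ to $(F_-,F_0,F_+)$ (with structure maps $\eta_\pm,\xi_\pm$), then $e_0(\delta_\pm(E_\pm))\subseteq\eta_\pm(F_\pm)$ and $e_0(\ker\gamma_\pm)\subseteq\ker\xi_\pm$, so $e_0$ is a morphism in $\mathcal{C}$. Consequently $T:\mathcal{A}_2\to\mathcal{C}$, $T(E)=(E_0,\delta_-(E_-),\delta_+(E_+),\ker\gamma_-,\ker\gamma_+)$, $T(e_-,e_0,e_+)=e_0$, is a well-defined functor.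
   Context: Fix a field $\mathbf{k}$. Category $\mathcal{A}_2$: objects are $(E_-,E_0,E_+)$ with vector spaces $E_-,E_0,E_+$ and linear maps $\delta_-:E_-\to E_0$, $\gamma_-:E_0\to E_-$, $\delta_+:E_+\to E_0$, $\gamma_+:E_0\to E_+$ such that $\gamma_+\delta_+=1_{E_+}$, $\gamma_-\delta_-=1_{E_-}$, and $\gamma_-\delta_+:E_+\to E_-$, $\gamma_+\delta_-:E_-\to E_+$ are isomorphisms. A morphism to $(F_-,F_0,F_+)$ (maps $\eta_\pm:F_\pm\to F_0$, $\xi_\pm:F_0\to F_\pm$) is a triple of linear maps $(e_-,e_0,e_+)$ with $e_0\delta_\pm=\eta_\pm e_\pm$ and $\xi_\pm e_0=e_\pm\gamma_\pm$. Category $\mathcal{C}$: objects are tuples $(V,A_1,A_2,B_1,B_2)$ with $V$ a vector space and subspaces $A_1,A_2,B_1,B_2\subseteq V$ such that $V=A_i\oplus B_j$ (internal direct sum) for all $i,j\in\{1,2\}$; morphisms $(V,A,B)\to(W,X,Y)$ are linear maps $\varphi$ with $\varphi(A_i)\subseteq X_i$, $\varphi(B_i)\subseteq Y_i$. *)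

theory Defs
  imports Complex_Main
begin

text \<open>Vector spaces over a field 'k are modelled as types 'v :: ab_group_add together with a
scalar multiplication s :: 'k \<Rightarrow> 'v \<Rightarrow> 'v satisfying the vector_space axioms; the whole
vector space is UNIV of that type.\<close>

definition idsum :: "'v::ab_group_add set \<Rightarrow> 'v set \<Rightarrow> 'v set \<Rightarrow> bool" where
  "idsum V A B \<longleftrightarrow> A \<inter> B = {0} \<and> V = {a + b | a b. a \<in> A \<and> b \<in> B}"

definition objA2 ::
  "('k::field \<Rightarrow> 'm::ab_group_add \<Rightarrow> 'm) \<Rightarrow> ('k \<Rightarrow> 'z::ab_group_add \<Rightarrow> 'z) \<Rightarrow> ('k \<Rightarrow> 'p::ab_group_add \<Rightarrow> 'p)
   \<Rightarrow> ('m \<Rightarrow> 'z) \<Rightarrow> ('z \<Rightarrow> 'm) \<Rightarrow> ('p \<Rightarrow> 'z) \<Rightarrow> ('z \<Rightarrow> 'p) \<Rightarrow> bool" where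
  "objA2 sm s0 sp dm gm dp gp \<longleftrightarrow>
     vector_space sm \<and> vector_space s0 \<and> vector_space sp \<and>
     Vector_Spaces.linear sm s0 dm \<and> Vector_Spaces.linear s0 sm gm \<and>
     Vector_Spaces.linear sp s0 dp \<and> Vector_Spaces.linear s0 sp gp \<and>
     gp \<circ> dp = id \<and> gm \<circ> dm = id \<and>
     bij (gm \<circ> dp) \<and> bij (gp \<circ> dm)"

definition morA2 ::
  "('k::field \<Rightarrow> 'm::ab_group_add \<Rightarrow> 'm) \<Rightarrow> ('k \<Rightarrow> 'z::ab_group_add \<Rightarrow> 'z) \<Rightarrow> ('k \<Rightarrow> 'p::ab_group_add \<Rightarrow> 'p)
   \<Rightarrow> ('m \<Rightarrow> 'z) \<Rightarrow> ('z \<Rightarrow> 'm) \<Rightarrow> ('p \<Rightarrow> 'z) \<Rightarrow> ('z \<Rightarrow> 'p)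
   \<Rightarrow> ('k \<Rightarrow> 'm2::ab_group_add \<Rightarrow> 'm2) \<Rightarrow> ('k \<Rightarrow> 'z2::ab_group_add \<Rightarrow> 'z2) \<Rightarrow> ('k \<Rightarrow> 'p2::ab_group_add \<Rightarrow> 'p2)
   \<Rightarrow> ('m2 \<Rightarrow> 'z2) \<Rightarrow> ('z2 \<Rightarrow> 'm2) \<Rightarrow> ('p2 \<Rightarrow> 'z2) \<Rightarrow> ('z2 \<Rightarrow> 'p2)
   \<Rightarrow> ('m \<Rightarrow> 'm2) \<Rightarrow> ('z \<Rightarrow> 'z2) \<Rightarrow> ('p \<Rightarrow> 'p2) \<Rightarrow> bool" where
  "morA2 sm s0 sp dm gm dp gp tm t0 tp em xm ep xp fm f0 fp \<longleftrightarrow>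
     Vector_Spaces.linear sm tm fm \<and> Vector_Spaces.linear s0 t0 f0 \<and> Vector_Spaces.linear sp tp fp \<and>
     f0 \<circ> dm = em \<circ> fm \<and> f0 \<circ> dp = ep \<circ> fp \<and>
     xm \<circ> f0 = fm \<circ> gm \<and> xp \<circ> f0 = fp \<circ> gp"

definition objC :: "('k::field \<Rightarrow> 'v::ab_group_add \<Rightarrow> 'v) \<Rightarrow> 'v set \<Rightarrow> 'v set \<Rightarrow> 'v set \<Rightarrow> 'v set \<Rightarrow> bool" where
  "objC s A1 A2 B1 B2 \<longleftrightarrow> vector_space s \<and>
     module.subspace s A1 \<and> module.subspace s A2 \<and> module.subspace s B1 \<and> module.subspace s B2 \<and>
     idsum UNIV A1 B1 \<and> idsum UNIV A1 B2 \<and> idsum UNIV A2 B1 \<and> idsum UNIV A2 B2"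

definition morC :: "('k::field \<Rightarrow> 'v::ab_group_add \<Rightarrow> 'v) \<Rightarrow> 'v set \<Rightarrow> 'v set \<Rightarrow> 'v set \<Rightarrow> 'v set
   \<Rightarrow> ('k \<Rightarrow> 'w::ab_group_add \<Rightarrow> 'w) \<Rightarrow> 'w set \<Rightarrow> 'w set \<Rightarrow> 'w set \<Rightarrow> 'w set \<Rightarrow> ('v \<Rightarrow> 'w) \<Rightarrow> bool" where
  "morC s A1 A2 B1 B2 t X1 X2 Y1 Y2 \<phi> \<longleftrightarrow> Vector_Spaces.linear s t \<phi> \<and>
     \<phi> ` A1 \<subseteq> X1 \<and> \<phi> ` A2 \<subseteq> X2 \<and> \<phi> ` B1 \<subseteq> Y1 \<and> \<phi> ` B2 \<subseteq> Y2"

definition ker :: "('a \<Rightarrow> 'b::zero) \<Rightarrow> 'a set" where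
  "ker f = {x. f x = 0}"

end

theory Submission
  imports Defs
begin

lemma lin_add: "Vector_Spaces.linear s1 s2 f \<Longrightarrow> f (x + y) = f x + f y"
  by (simp add: Vector_Spaces.linear_iff)

lemma lin_zero: assumes "Vector_Spaces.linear s1 s2 (f::'a::ab_group_add \<Rightarrow> 'b::ab_group_add)" shows "f 0 = 0"
proof -
  have "f (0 + 0) = f 0 + f 0" by (rule lin_add[OF assms])
  thus ?thesis by simp
qed

lemma lin_diff: assumes "Vector_Spaces.linear s1 s2 (f::'a::ab_group_add \<Rightarrow> 'b::ab_group_add)"
  shows "f (x - y) = f x - f y"
proof -
  have "f (x - y + y) = f (x - y) + f y" by (rule lin_add[OF assms])
  thus ?thesis by (simp add: algebra_simps)
qed

lemma ds_lemma:
  fixes d :: "'a::ab_group_add \<Rightarrow> 'z::ab_group_add" and g :: "'z \<Rightarrow> 'b::ab_group_add"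
  assumes ld: "Vector_Spaces.linear s1 s0 d" and lg: "Vector_Spaces.linear s0 s2 g"
    and b: "bij (g \<circ> d)"
  shows "idsum UNIV (range d) (ker g)"
  unfolding idsum_def
proof
  show "range d \<inter> ker g = {0}"
  proof (rule set_eqI, rule iffI)
    fix x assume "x \<in> range d \<inter> ker g"
    then obtain y where y: "x = d y" "g (d y) = 0" by (auto simp: ker_def)
    have "(g \<circ> d) y = (g \<circ> d) 0" using y lin_zero[OF ld] lin_zero[OF lg] by simp
    hence "y = 0" using bij_is_inj[OF b] by (meson injD)
    thus "x \<in> {0}" using y lin_zero[OF ld] by simp
  next
    fix x assume "x \<in> {(0::'z)}"
    thus "x \<in> range d \<inter> ker g" using lin_zero[OF ld] lin_zero[OF lg] 
      by (auto simp: ker_def intro: range_eqI[of _ _ 0])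
  qed
  show "UNIV = {a + b |a b. a \<in> range d \<and> b \<in> ker g}"
  proof (rule set_eqI, rule iffI)
    fix x :: 'z
    obtain u where u: "(g \<circ> d) u = g x" using bij_is_surj[OF b] by (metis surjD)
    have "g (x - d u) = 0" using u lin_diff[OF lg] by simp
    hence "x = d u + (x - d u) \<and> d u \<in> range d \<and> x - d u \<in> ker g" by (simp add: ker_def)
    thus "x \<in> {a + b |a b. a \<in> range d \<and> b \<in> ker g}" by blast
  qed simp
qed

lemma bij_id_comp: "g \<circ> d = id \<Longrightarrow> bij (g \<circ> d)" by simp

lemma sub_range: "Vector_Spaces.linear s1 s2 f \<Longrightarrow> module.subspace s2 (range f)"
  by (metis module_hom.subspace_image module_hom_iff_linear module.subspace_UNIV module_hom.axioms(1))

lemma sub_ker: "Vector_Spaces.linear s1 s2 f \<Longrightarrow> module.subspace s1 (ker f)"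
  unfolding ker_def by (metis module_hom.subspace_kernel module_hom_iff_linear)

theorem mainTheorem4:
  fixes sm :: "'k::field \<Rightarrow> 'm::ab_group_add \<Rightarrow> 'm" and s0 :: "'k \<Rightarrow> 'z::ab_group_add \<Rightarrow> 'z"
    and sp :: "'k \<Rightarrow> 'p::ab_group_add \<Rightarrow> 'p"
    and dm :: "'m \<Rightarrow> 'z" and gm :: "'z \<Rightarrow> 'm" and dp :: "'p \<Rightarrow> 'z" and gp :: "'z \<Rightarrow> 'p"
  assumes "objA2 sm s0 sp dm gm dp gp"
  shows "idsum UNIV (range dm) (ker gm) \<and> idsum UNIV (range dp) (ker gp) \<and>
         idsum UNIV (range dp) (ker gm) \<and> idsum UNIV (range dm) (ker gp) \<and>
         objC s0 (range dm) (range dp) (ker gm) (ker gp) \<and>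
         (\<forall> (tm :: 'k \<Rightarrow> 'm2::ab_group_add \<Rightarrow> 'm2) (t0 :: 'k \<Rightarrow> 'z2::ab_group_add \<Rightarrow> 'z2)
            (tp :: 'k \<Rightarrow> 'p2::ab_group_add \<Rightarrow> 'p2) em xm ep xp fm f0 fp.
            objA2 tm t0 tp em xm ep xp \<longrightarrow>
            morA2 sm s0 sp dm gm dp gp tm t0 tp em xm ep xp fm f0 fp \<longrightarrow>
            f0 ` range dm \<subseteq> range em \<and> f0 ` range dp \<subseteq> range ep \<and>
            f0 ` ker gm \<subseteq> ker xm \<and> f0 ` ker gp \<subseteq> ker xp \<and>
            morC s0 (range dm) (range dp) (ker gm) (ker gp)
                 t0 (range em) (range ep) (ker xm) (ker xp) f0)"
proof -
  note A = assms[unfolded objA2_def]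
  have ldm: "Vector_Spaces.linear sm s0 dm" and lgm: "Vector_Spaces.linear s0 sm gm"
    and ldp: "Vector_Spaces.linear sp s0 dp" and lgp: "Vector_Spaces.linear s0 sp gp"
    and b1: "bij (gm \<circ> dm)" and b2: "bij (gp \<circ> dp)" and b3: "bij (gm \<circ> dp)" and b4: "bij (gp \<circ> dm)"
    using A by auto
  have d1: "idsum UNIV (range dm) (ker gm)" by (rule ds_lemma[OF ldm lgm b1])
  have d2: "idsum UNIV (range dp) (ker gp)" by (rule ds_lemma[OF ldp lgp b2])
  have d3: "idsum UNIV (range dp) (ker gm)" by (rule ds_lemma[OF ldp lgm b3])
  have d4: "idsum UNIV (range dm) (ker gp)" by (rule ds_lemma[OF ldm lgp b4])
  have oc: "objC s0 (range dm) (range dp) (ker gm) (ker gp)"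
    unfolding objC_def using A d1 d2 d3 d4 sub_range[OF ldm] sub_range[OF ldp] sub_ker[OF lgm] sub_ker[OF lgp] by blast
  show ?thesis
  proof (intro conjI d1 d2 d3 d4 oc allI impI)
    fix tm :: "'k \<Rightarrow> 'm2::ab_group_add \<Rightarrow> 'm2" and t0 :: "'k \<Rightarrow> 'z2::ab_group_add \<Rightarrow> 'z2"
      and tp :: "'k \<Rightarrow> 'p2::ab_group_add \<Rightarrow> 'p2" and em xm ep xp fm f0 fp
    assume o2: "objA2 tm t0 tp em xm ep xp"
      and m: "morA2 sm s0 sp dm gm dp gp tm t0 tp em xm ep xp fm f0 fp"
    note M = m[unfolded morA2_def]
    have fm0: "fm 0 = 0" using M lin_zero by blast
    have fp0: "fp 0 = 0" using M lin_zero by blast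
    have r1: "f0 ` range dm \<subseteq> range em"
    proof
      fix x assume "x \<in> f0 ` range dm"
      then obtain y where "x = f0 (dm y)" by auto
      hence "x = em (fm y)" using M by (metis comp_apply)
      thus "x \<in> range em" by simp
    qed
    have r2: "f0 ` range dp \<subseteq> range ep"
    proof
      fix x assume "x \<in> f0 ` range dp"
      then obtain y where "x = f0 (dp y)" by auto
      hence "x = ep (fp y)" using M by (metis comp_apply)
      thus "x \<in> range ep" by simp
    qed
    have r3: "f0 ` ker gm \<subseteq> ker xm"
    proof
      fix x assume "x \<in> f0 ` ker gm"
      then obtain y where y: "x = f0 y" "gm y = 0" by (auto simp: ker_def)
      have "xm (f0 y) = fm (gm y)" using M by (metis comp_apply)
      thus "x \<in> ker xm" using y fm0 by (simp add: ker_def)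
    qed
    have r4: "f0 ` ker gp \<subseteq> ker xp"
    proof
      fix x assume "x \<in> f0 ` ker gp"
      then obtain y where y: "x = f0 y" "gp y = 0" by (auto simp: ker_def)
      have "xp (f0 y) = fp (gp y)" using M by (metis comp_apply)
      thus "x \<in> ker xp" using y fp0 by (simp add: ker_def)
    qed
    show "f0 ` range dm \<subseteq> range em" by (rule r1)
    show "f0 ` range dp \<subseteq> range ep" by (rule r2)
    show "f0 ` ker gm \<subseteq> ker xm" by (rule r3)
    show "f0 ` ker gp \<subseteq> ker xp" by (rule r4)
    show "morC s0 (range dm) (range dp) (ker gm) (ker gp) t0 (range em) (range ep) (ker xm) (ker xp) f0"
      unfolding morC_def using M r1 r2 r3 r4 by blast
  qed
qed

end
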